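(* Let $\Lambda$ be a countable index set, $\overline{a},\overline{r}$ sequences of positive reals indexed by $\Lambda$, $t\in(1,2)$ and $x\in\mathbb{R}^\Lambda$. Then $x\in k_t$ if and only if $\eta(x):=\sup_{\alpha>0}\alpha^{t-1}\|T_\alpha(x)\|_{\overline{r},1}<\infty$. More precisely, $\eta(x)\le2(1-2^{1-t})^{-1}\|x\|_{k_t}^t$ and $\|x\|_{k_t}\le\eta(x)^{1/t}$.
   Context: $\|x\|_{\overline{r},1}=\sum_{j\in\Lambda}\overline{r}_j|x_j|$ (possibly $+\infty$). For $t\in(0,2)$, $k_t=\{x\in\mathbb{R}^\Lambda:\|x\|_{k_t}<\infty\}$ with $\|x\|_{k_t}=\sup_{\alpha>0}\alpha\left(\sum_{j}\overline{a}_j^{-2}\overline{r}_j^2\mathbf{1}_{\{\overline{a}_j^{-2}\overline{r}_j\alpha<|x_j|\}}\right)^{1/t}$. For $\alpha>0$, $T_\alpha(x)_j=x_j$ if $\overline{a}_j^{-2}\overline{r}_j\alpha<|x_j|$ and $T_\alpha(x)_j=0$ otherwise. *)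

theory Defs
  imports "HOL-Analysis.Analysis"
begin

text \<open>Positive real power on extended nonnegative reals (exponent p > 0 intended):
  infinity to a positive power is infinity.\<close>
definition enn_powr :: "ennreal \<Rightarrow> real \<Rightarrow> ennreal" where
  "enn_powr x p = (if x = top then top else ennreal (enn2real x powr p))"

definition r_norm1 :: "'i set \<Rightarrow> ('i \<Rightarrow> real) \<Rightarrow> ('i \<Rightarrow> real) \<Rightarrow> ennreal" where
  "r_norm1 \<Lambda> r x = (\<Sum>\<^sub>\<infinity> j\<in>\<Lambda>. ennreal (r j * \<bar>x j\<bar>))"

definition kt_norm :: "'i set \<Rightarrow> ('i \<Rightarrow> real) \<Rightarrow> ('i \<Rightarrow> real) \<Rightarrow> real \<Rightarrow> ('i \<Rightarrow> real) \<Rightarrow> ennreal" where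
  "kt_norm \<Lambda> a r t x = (SUP \<alpha>\<in>{0<..}. ennreal \<alpha> *
      enn_powr (\<Sum>\<^sub>\<infinity> j\<in>\<Lambda>. ennreal ((a j) powi (-2) * (r j)\<^sup>2 *
                   of_bool ((a j) powi (-2) * r j * \<alpha> < \<bar>x j\<bar>))) (1 / t))"

definition kt :: "'i set \<Rightarrow> ('i \<Rightarrow> real) \<Rightarrow> ('i \<Rightarrow> real) \<Rightarrow> real \<Rightarrow> ('i \<Rightarrow> real) set" where
  "kt \<Lambda> a r t = {x. kt_norm \<Lambda> a r t x < top}"

definition T_thr :: "('i \<Rightarrow> real) \<Rightarrow> ('i \<Rightarrow> real) \<Rightarrow> real \<Rightarrow> ('i \<Rightarrow> real) \<Rightarrow> ('i \<Rightarrow> real)" where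
  "T_thr a r \<alpha> x = (\<lambda>j. if (a j) powi (-2) * r j * \<alpha> < \<bar>x j\<bar> then x j else 0)"

definition eta :: "'i set \<Rightarrow> ('i \<Rightarrow> real) \<Rightarrow> ('i \<Rightarrow> real) \<Rightarrow> real \<Rightarrow> ('i \<Rightarrow> real) \<Rightarrow> ennreal" where
  "eta \<Lambda> a r t x = (SUP \<alpha>\<in>{0<..}. ennreal (\<alpha> powr (t - 1)) * r_norm1 \<Lambda> r (T_thr a r \<alpha> x))"

end

theory Submission
  imports Defs
begin

lemma L1:
  fixes b n e t :: real
  assumes "b > 0" "n \<ge> 0" "e \<ge> 0" "t > 0" "b powr t * n \<le> e"
  shows "b * n powr (1/t) \<le> e powr (1/t)"
proof -
  have "(b powr t * n) powr (1/t) \<le> e powr (1/t)"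
    using assms by (intro powr_mono2) auto
  also have "(b powr t * n) powr (1/t) = (b powr t) powr (1/t) * n powr (1/t)"
    using assms by (simp add: powr_mult)
  also have "(b powr t) powr (1/t) = b"
    using assms by (simp add: powr_powr)
  finally show ?thesis .
qed

lemma L2:
  fixes b n k t :: real
  assumes "b > 0" "n \<ge> 0" "t > 0" "b * n powr (1/t) \<le> k"
  shows "n \<le> (k / b) powr t"
proof -
  have "n powr (1/t) \<le> k / b" using assms by (simp add: field_simps mult.commute)
  hence "(n powr (1/t)) powr t \<le> (k/b) powr t"
    using assms by (intro powr_mono2) auto
  also have "(n powr (1/t)) powr t = n" using assms by (simp add: powr_powr)
  finally show ?thesis .
qed

lemma L3:
  fixes al kk t :: real and k :: nat
  assumes "al > 0" "kk \<ge> 0"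
  shows "al powr (t - 1) * (2 ^ (k+1) * al * (kk / (2 ^ k * al)) powr t)
       = 2 * kk powr t * (2 powr (1 - t)) ^ k"
proof -
  have d: "((2::real) ^ k) powr t = (2 powr t) ^ k"
  proof -
    have "((2::real) ^ k) powr t = (2 powr real k) powr t" by (simp add: powr_realpow)
    also have "\<dots> = (2 powr t) powr real k" by (simp add: powr_powr mult.commute)
    also have "\<dots> = (2 powr t) ^ k" by (simp add: powr_realpow)
    finally show ?thesis .
  qed
  have a: "(kk / (2 ^ k * al)) powr t = kk powr t / ((2 powr t) ^ k * al powr t)"
    using assms by (simp add: powr_divide powr_mult d)
  have b: "al powr (t - 1) * al = al powr t"
    using assms by (simp add: powr_diff)
  have c: "2 powr (1 - t) = 2 / 2 powr t" by (simp add: powr_diff)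
  show ?thesis
    using assms unfolding a c
    by (simp add: field_simps power_divide b flip: b)
qed


lemma finsum_le_infsum_ennreal:
  fixes f :: "'a \<Rightarrow> ennreal"
  assumes "finite F" "F \<subseteq> A"
  shows "sum f F \<le> infsum f A"
proof -
  have "infsum f A = (SUP F\<in>{F. finite F \<and> F \<subseteq> A}. sum f F)"
    by (rule nonneg_infsum_complete) simp
  moreover have "sum f F \<le> (SUP F\<in>{F. finite F \<and> F \<subseteq> A}. sum f F)"
    using assms by (intro SUP_upper) auto
  ultimately show ?thesis by simp
qed

lemma ennreal_swap_le:
  fixes g :: "nat \<Rightarrow> 'a \<Rightarrow> ennreal"
  shows "infsum (\<lambda>j. \<Sum>k. g k j) A \<le> (\<Sum>k. infsum (g k) A)"
proof -
  have "infsum (\<lambda>j. \<Sum>k. g k j) A = (SUP F\<in>{F. finite F \<and> F \<subseteq> A}. sum (\<lambda>j. \<Sum>k. g k j) F)"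
    by (rule nonneg_infsum_complete) simp
  also have "\<dots> \<le> (\<Sum>k. infsum (g k) A)"
  proof (rule SUP_least)
    fix F assume F: "F \<in> {F. finite F \<and> F \<subseteq> A}"
    have "sum (\<lambda>j. \<Sum>k. g k j) F = (\<Sum>k. \<Sum>j\<in>F. g k j)"
      by (rule suminf_sum[symmetric]) (simp add: summableI)
    also have "\<dots> \<le> (\<Sum>k. infsum (g k) A)"
      by (rule suminf_le) (use F in \<open>auto simp: summableI intro: finsum_le_infsum_ennreal\<close>)
    finally show "sum (\<lambda>j. \<Sum>k. g k j) F \<le> (\<Sum>k. infsum (g k) A)" .
  qed
  finally show ?thesis .
qed

lemma single_le_suminf_ennreal: "(f :: nat \<Rightarrow> ennreal) m \<le> suminf f"
  using sum_le_suminf[of f "{m}"] by (simp add: summableI)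


lemma infsum_cmult_ennreal:
  fixes f :: "'a \<Rightarrow> ennreal"
  shows "infsum (\<lambda>j. c * f j) A = c * infsum f A"
proof -
  have "infsum (\<lambda>j. c * f j) A = (SUP F\<in>{F. finite F \<and> F \<subseteq> A}. sum (\<lambda>j. c * f j) F)"
    by (rule nonneg_infsum_complete) simp
  also have "\<dots> = (SUP F\<in>{F. finite F \<and> F \<subseteq> A}. c * sum f F)"
    by (simp add: sum_distrib_left)
  also have "\<dots> = c * (SUP F\<in>{F. finite F \<and> F \<subseteq> A}. sum f F)"
    by (rule SUP_mult_left_ennreal[symmetric])
  also have "(SUP F\<in>{F. finite F \<and> F \<subseteq> A}. sum f F) = infsum f A"
    by (rule nonneg_infsum_complete[symmetric]) simp
  finally show ?thesis .
qed

lemma dyadic: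
  fixes y z :: real
  assumes "z > 0" "z < y"
  shows "\<exists>m::nat. 2 ^ m * z < y \<and> y \<le> 2 ^ (m+1) * z"
proof -
  obtain n :: nat where n: "y / z < 2 ^ n"
    using real_arch_pow[of 2 "y / z"] by auto
  have "y < 2 ^ n * z" using n assms by (simp add: field_simps)
  hence Pn: "y \<le> 2 ^ (n+1) * z" using assms by simp
  define m where "m = (LEAST m::nat. y \<le> 2 ^ (m+1) * z)"
  have Pm: "y \<le> 2 ^ (m+1) * z" unfolding m_def by (rule LeastI[of _ n]) (rule Pn)
  have "2 ^ m * z < y"
  proof (cases m)
    case 0 then show ?thesis using assms by simp
  next
    case (Suc m')
    have "m' < m" using Suc by simp
    hence "\<not> y \<le> 2 ^ (m'+1) * z" unfolding m_def by (rule not_less_Least)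
    then show ?thesis using Suc by simp
  qed
  with Pm show ?thesis by blast
qed

lemma enn_powr_ennreal: "e \<ge> 0 \<Longrightarrow> enn_powr (ennreal e) p = ennreal (e powr p)"
  by (simp add: enn_powr_def)

lemma enn_powr_top: "enn_powr top p = top"
  by (simp add: enn_powr_def)

theorem lemma5p1:
  fixes \<Lambda> :: "'i set" and a r x :: "'i \<Rightarrow> real" and t :: real
  assumes "countable \<Lambda>"
    and "\<And>j. j \<in> \<Lambda> \<Longrightarrow> a j > 0"
    and "\<And>j. j \<in> \<Lambda> \<Longrightarrow> r j > 0"
    and "1 < t" and "t < 2"
  shows "(x \<in> kt \<Lambda> a r t \<longleftrightarrow> eta \<Lambda> a r t x < top)
       \<and> eta \<Lambda> a r t x \<le> ennreal (2 / (1 - 2 powr (1 - t))) * enn_powr (kt_norm \<Lambda> a r t x) t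
       \<and> kt_norm \<Lambda> a r t x \<le> enn_powr (eta \<Lambda> a r t x) (1 / t)"
proof -
  have apos: "a j powi (-2) > 0" if "j \<in> \<Lambda>" for j
    using assms(2)[OF that] by (simp add: power_int_def)
  define N where "N \<beta> = (\<Sum>\<^sub>\<infinity> j\<in>\<Lambda>. ennreal ((a j) powi (-2) * (r j)\<^sup>2 *
                   of_bool ((a j) powi (-2) * r j * \<beta> < \<bar>x j\<bar>)))" for \<beta>
  define K where "K = kt_norm \<Lambda> a r t x"
  have K_eq: "K = (SUP \<beta>\<in>{0<..}. ennreal \<beta> * enn_powr (N \<beta>) (1 / t))"
    unfolding K_def kt_norm_def N_def ..
  define E where "E \<alpha> = ennreal (\<alpha> powr (t - 1)) * r_norm1 \<Lambda> r (T_thr a r \<alpha> x)" for \<alpha>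
  define H where "H = eta \<Lambda> a r t x"
  have H_eq: "H = (SUP \<alpha>\<in>{0<..}. E \<alpha>)" unfolding H_def eta_def E_def ..
  have EH: "E \<alpha> \<le> H" if "\<alpha> > 0" for \<alpha>
    unfolding H_eq using that by (intro SUP_upper) auto

  have key3: "ennreal (\<beta> powr t) * N \<beta> \<le> H" if b: "\<beta> > 0" for \<beta>
  proof -
    have "ennreal \<beta> * N \<beta> = (\<Sum>\<^sub>\<infinity> j\<in>\<Lambda>. ennreal \<beta> * ennreal ((a j) powi (-2) * (r j)\<^sup>2 *
                   of_bool ((a j) powi (-2) * r j * \<beta> < \<bar>x j\<bar>)))"
      unfolding N_def by (rule infsum_cmult_ennreal[symmetric])
    also have "\<dots> \<le> (\<Sum>\<^sub>\<infinity> j\<in>\<Lambda>. ennreal (r j * \<bar>T_thr a r \<beta> x j\<bar>))"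
    proof (rule infsum_mono)
      fix j assume j: "j \<in> \<Lambda>"
      have rj: "r j > 0" using assms(3)[OF j] .
      have aj: "a j powi (-2) > 0" using apos[OF j] .
      show "ennreal \<beta> * ennreal ((a j) powi (-2) * (r j)\<^sup>2 *
                   of_bool ((a j) powi (-2) * r j * \<beta> < \<bar>x j\<bar>)) \<le> ennreal (r j * \<bar>T_thr a r \<beta> x j\<bar>)"
      proof (cases "(a j) powi (-2) * r j * \<beta> < \<bar>x j\<bar>")
        case True
        have "\<beta> * (a j powi (-2) * (r j)\<^sup>2) = r j * (a j powi (-2) * r j * \<beta>)"
          by (simp add: power2_eq_square)
        also have "\<dots> \<le> r j * \<bar>x j\<bar>" using True rj by simp
        finally have "\<beta> * (a j powi (-2) * (r j)\<^sup>2) \<le> r j * \<bar>x j\<bar>" .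
        then show ?thesis using True b aj
          by (simp add: T_thr_def ennreal_mult[symmetric] ennreal_leI)
      next
        case False
        then show ?thesis by simp
      qed
    qed (simp_all add: nonneg_summable_on_complete)
    also have "\<dots> = r_norm1 \<Lambda> r (T_thr a r \<beta> x)" unfolding r_norm1_def ..
    finally have 1: "ennreal \<beta> * N \<beta> \<le> r_norm1 \<Lambda> r (T_thr a r \<beta> x)" .
    have "ennreal (\<beta> powr t) = ennreal (\<beta> powr (t - 1)) * ennreal \<beta>"
      using b by (simp add: ennreal_mult[symmetric] powr_diff)
    hence "ennreal (\<beta> powr t) * N \<beta> = ennreal (\<beta> powr (t - 1)) * (ennreal \<beta> * N \<beta>)"
      by (simp add: mult.assoc)
    also have "\<dots> \<le> E \<beta>" unfolding E_def using 1 by (intro mult_left_mono) auto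
    also have "\<dots> \<le> H" using EH b by simp
    finally show ?thesis .
  qed
  have part3: "K \<le> enn_powr H (1 / t)"
    unfolding K_eq
  proof (rule SUP_least)
    fix \<beta> :: real assume "\<beta> \<in> {0<..}"
    hence b: "\<beta> > 0" by simp
    show "ennreal \<beta> * enn_powr (N \<beta>) (1 / t) \<le> enn_powr H (1 / t)"
    proof (cases "H = top")
      case True then show ?thesis by (simp add: enn_powr_top)
    next
      case False
      then obtain e where e: "H = ennreal e" "e \<ge> 0" by (cases H) auto
      have "N \<beta> \<noteq> top"
      proof
        assume "N \<beta> = top"
        hence "ennreal (\<beta> powr t) * N \<beta> = top" using b by (simp add: ennreal_mult_top)
        with key3[OF b] False show False by (simp add: top_unique)
      qed
      then obtain n where n: "N \<beta> = ennreal n" "n \<ge> 0" by (cases "N \<beta>") auto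
      have "ennreal (\<beta> powr t * n) \<le> ennreal e"
        using key3[OF b] n e b by (simp add: ennreal_mult)
      hence "\<beta> powr t * n \<le> e" using e by (simp add: ennreal_le_iff)
      hence "\<beta> * n powr (1/t) \<le> e powr (1/t)"
        using L1[of \<beta> n e t] b n e assms(4) by simp
      thus ?thesis using n e b
        by (simp add: enn_powr_ennreal ennreal_mult[symmetric] ennreal_leI)
    qed
  qed

  define C where "C = 2 / (1 - 2 powr (1 - t))"
  have q1: "2 powr (1 - t) < (1::real)" using assms(4) by (simp add: powr_less_one)
  have q0: "2 powr (1 - t) > (0::real)" by simp
  have Cpos: "C > 0" unfolding C_def using q1 by simp
  have part2: "H \<le> ennreal C * enn_powr K t"
  proof (cases "K = top")
    case True
    then show ?thesis using Cpos by (simp add: enn_powr_top ennreal_mult_top)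
  next
    case False
    then obtain kk where kk: "K = ennreal kk" "kk \<ge> 0" by (cases K) auto
    have Nb: "N \<beta> \<le> ennreal ((kk / \<beta>) powr t)" if b: "\<beta> > 0" for \<beta>
    proof -
      have up: "ennreal \<beta> * enn_powr (N \<beta>) (1 / t) \<le> K"
        unfolding K_eq using b by (intro SUP_upper) auto
      have "N \<beta> \<noteq> top"
      proof
        assume "N \<beta> = top"
        hence "ennreal \<beta> * enn_powr (N \<beta>) (1 / t) = top"
          using b by (simp add: enn_powr_top ennreal_mult_top)
        with up kk show False by (simp add: top_unique)
      qed
      then obtain n where n: "N \<beta> = ennreal n" "n \<ge> 0" by (cases "N \<beta>") auto
      have "ennreal (\<beta> * n powr (1/t)) \<le> ennreal kk"
        using up n kk b by (simp add: enn_powr_ennreal ennreal_mult)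
      hence "\<beta> * n powr (1/t) \<le> kk" using kk by (simp add: ennreal_le_iff)
      hence "n \<le> (kk / \<beta>) powr t" using L2[of \<beta> n t kk] b n assms(4) by simp
      thus ?thesis using n by (simp add: ennreal_leI)
    qed
    have Ebound: "E \<alpha> \<le> ennreal (C * kk powr t)" if al: "\<alpha> > 0" for \<alpha>
    proof -
      define g where "g m j = ennreal (2 ^ (m+1) * \<alpha>) * ennreal ((a j) powi (-2) * (r j)\<^sup>2 *
                   of_bool ((a j) powi (-2) * r j * (2 ^ m * \<alpha>) < \<bar>x j\<bar>))" for m j
      have pw: "ennreal (r j * \<bar>T_thr a r \<alpha> x j\<bar>) \<le> (\<Sum>m. g m j)" if j: "j \<in> \<Lambda>" for j
      proof (cases "(a j) powi (-2) * r j * \<alpha> < \<bar>x j\<bar>")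
        case False
        then show ?thesis by (simp add: T_thr_def)
      next
        case True
        have rj: "r j > 0" using assms(3)[OF j] .
        have aj: "a j powi (-2) > 0" using apos[OF j] .
        have zpos: "(a j) powi (-2) * r j * \<alpha> > 0" using rj aj al by simp
        obtain m :: nat where m: "2 ^ m * ((a j) powi (-2) * r j * \<alpha>) < \<bar>x j\<bar>"
             "\<bar>x j\<bar> \<le> 2 ^ (m+1) * ((a j) powi (-2) * r j * \<alpha>)"
          using dyadic[OF zpos True] by blast
        have c1: "(a j) powi (-2) * r j * (2 ^ m * \<alpha>) < \<bar>x j\<bar>"
          using m(1) by (simp add: ac_simps)
        have "r j * \<bar>x j\<bar> \<le> r j * (2 ^ (m+1) * ((a j) powi (-2) * r j * \<alpha>))"
          using m(2) rj by simp
        also have "\<dots> = 2 ^ (m+1) * \<alpha> * ((a j) powi (-2) * (r j)\<^sup>2)"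
          by (simp add: power2_eq_square ac_simps)
        finally have ineq: "r j * \<bar>x j\<bar> \<le> 2 ^ (m+1) * \<alpha> * ((a j) powi (-2) * (r j)\<^sup>2)" .
        have "ennreal (r j * \<bar>T_thr a r \<alpha> x j\<bar>) \<le> g m j"
          unfolding g_def using True c1 ineq al aj
          by (simp add: T_thr_def ennreal_mult[symmetric] ennreal_leI)
        also have "\<dots> \<le> (\<Sum>m. g m j)" by (rule single_le_suminf_ennreal)
        finally show ?thesis .
      qed
      define h where "h m = 2 ^ (m+1) * \<alpha> * (kk / (2 ^ m * \<alpha>)) powr t" for m :: nat
      have "r_norm1 \<Lambda> r (T_thr a r \<alpha> x) \<le> (\<Sum>\<^sub>\<infinity> j\<in>\<Lambda>. \<Sum>m. g m j)"
        unfolding r_norm1_def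
        by (rule infsum_mono) (simp_all add: nonneg_summable_on_complete pw)
      also have "\<dots> \<le> (\<Sum>m. infsum (g m) \<Lambda>)" by (rule ennreal_swap_le)
      also have "\<dots> = (\<Sum>m. ennreal (2 ^ (m+1) * \<alpha>) * N (2 ^ m * \<alpha>))"
        unfolding g_def N_def
        by (simp add: infsum_cmult_ennreal)
      also have "\<dots> \<le> (\<Sum>m. ennreal (h m))"
      proof (rule suminf_le)
        fix m :: nat
        have "ennreal (2 ^ (m+1) * \<alpha>) * N (2 ^ m * \<alpha>)
              \<le> ennreal (2 ^ (m+1) * \<alpha>) * ennreal ((kk / (2 ^ m * \<alpha>)) powr t)"
          using Nb[of "2 ^ m * \<alpha>"] al by (intro mult_left_mono) auto
        also have "\<dots> = ennreal (h m)" unfolding h_def using al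
          by (simp add: ennreal_mult[symmetric])
        finally show "ennreal (2 ^ (m+1) * \<alpha>) * N (2 ^ m * \<alpha>) \<le> ennreal (h m)" .
      qed (simp_all add: summableI)
      finally have 1: "r_norm1 \<Lambda> r (T_thr a r \<alpha> x) \<le> (\<Sum>m. ennreal (h m))" .
      define q where "q = 2 powr (1 - t)"
      have hq: "\<alpha> powr (t - 1) * h m = 2 * kk powr t * q ^ m" for m
        unfolding h_def q_def using L3[OF al kk(2), of t m] .
      have sq: "summable (\<lambda>m. 2 * kk powr t * q ^ m)"
        using q1 q0 unfolding q_def by (intro summable_mult summable_geometric) simp
      have "E \<alpha> \<le> ennreal (\<alpha> powr (t - 1)) * (\<Sum>m. ennreal (h m))"
        unfolding E_def using 1 by (intro mult_left_mono) auto
      also have "\<dots> = (\<Sum>m. ennreal (\<alpha> powr (t - 1)) * ennreal (h m))" by simp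
      also have "\<dots> = (\<Sum>m. ennreal (2 * kk powr t * q ^ m))"
      proof -
        have "ennreal (\<alpha> powr (t - 1)) * ennreal (h m) = ennreal (2 * kk powr t * q ^ m)" for m
        proof -
          have "h m \<ge> 0" unfolding h_def using al kk by simp
          thus ?thesis by (simp add: ennreal_mult[symmetric] hq)
        qed
        thus ?thesis by simp
      qed
      also have "\<dots> = ennreal (\<Sum>m. 2 * kk powr t * q ^ m)"
        using sq q0 kk unfolding q_def by (intro suminf_ennreal2) auto
      also have "(\<Sum>m. 2 * kk powr t * q ^ m) = 2 * kk powr t * (1 / (1 - q))"
        using q1 q0 unfolding q_def by (subst suminf_mult) (auto simp: suminf_geometric)
      also have "\<dots> = C * kk powr t" unfolding C_def q_def by simp
      finally show ?thesis .
    qed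
    have "H \<le> ennreal (C * kk powr t)"
      unfolding H_eq by (rule SUP_least) (use Ebound in auto)
    also have "\<dots> = ennreal C * enn_powr K t"
      using kk Cpos by (simp add: enn_powr_ennreal ennreal_mult)
    finally show ?thesis .
  qed

  have iff: "x \<in> kt \<Lambda> a r t \<longleftrightarrow> H < top"
  proof
    assume "x \<in> kt \<Lambda> a r t"
    hence "K < top" unfolding kt_def K_def by simp
    then obtain kk where kk: "K = ennreal kk" "kk \<ge> 0" by (cases K) auto
    have "H \<le> ennreal (C * kk powr t)"
      using part2 kk Cpos by (simp add: enn_powr_ennreal ennreal_mult)
    thus "H < top" using le_less_trans by fastforce
  next
    assume "H < top"
    then obtain e where e: "H = ennreal e" "e \<ge> 0" by (cases H) auto
    have "K \<le> ennreal (e powr (1/t))" using part3 e by (simp add: enn_powr_ennreal)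
    hence "K < top" using le_less_trans by fastforce
    thus "x \<in> kt \<Lambda> a r t" unfolding kt_def K_def by simp
  qed
  show ?thesis using iff part2 part3 unfolding H_def K_def C_def by simp
qed

end
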